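(* Let $\mathcal{C}$ be a cyclic conjugacy class with $n\ge2$ elements in a finite group $G$. Then, up to an overall nonzero scalar, every nondegenerate $\mathrm{Ad}$-invariant bilinear form $\eta$ on $\Omega_0^*$ (equivalently, every invertible matrix $(\eta^{a,b})_{a,b\in\mathcal{C}}$ with $\eta^{g^{-1}ag,\,b}=\eta^{a,\,gbg^{-1}}$ for all $g\in G$, $a,b\in\mathcal{C}$) has the form $$\eta^{a,b}=\delta_{a,b}+\mu$$ for a constant $\mu\neq-1/n$, and conversely each such $\eta$ is nondegenerate and $\mathrm{Ad}$-invariant. The associated metric in the Maurer–Cartan framing (coframing $e^{*a}=\sum_b e_b\eta^{ba}$, metric $g=\sum_a e^{*a}\otimes_H e_a$) is $$g=\sum_{a\in\mathcal{C}}e_a\otimes_H e_a+\mu\,\theta\otimes_H\theta.$$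
   Context: $H=\mathbb{C}[G]$ is the algebra of functions on the finite group $G$; $\Omega_0=\mathrm{span}\{\delta_a: a\in\mathcal{C}\}$, $\Omega_0^*$ its dual, with $G$ acting by conjugation $\mathrm{Ad}$. $\Omega^1(H)$ is the free left $H$-module with basis the Maurer–Cartan forms $\{e_a\}_{a\in\mathcal{C}}$, and $\theta=\sum_{a\in\mathcal{C}}e_a$. A conjugacy class $\mathcal{C}\not\ni e$ with $n\ge2$ elements is cyclic if there exists $t\in\mathcal{C}$ such that $\mathrm{Ad}_t(b)=tbt^{-1}$ restricts to a cyclic permutation of $\mathcal{C}\setminus\{t\}$ and the map $a\mapsto \mathrm{Ad}_a(t)$ is a permutation of $\mathcal{C}$. *)

theory Defs
  imports Complex_Main "HOL-Algebra.Group" "HOL-Library.FuncSet"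
begin

definition Ad :: "('a, 'b) monoid_scheme \<Rightarrow> 'a \<Rightarrow> 'a \<Rightarrow> 'a" where
  "Ad G g b = g \<otimes>\<^bsub>G\<^esub> b \<otimes>\<^bsub>G\<^esub> inv\<^bsub>G\<^esub> g"

definition conj_class :: "('a, 'b) monoid_scheme \<Rightarrow> 'a \<Rightarrow> 'a set" where
  "conj_class G x = {Ad G g x | g. g \<in> carrier G}"

definition is_conj_class :: "('a, 'b) monoid_scheme \<Rightarrow> 'a set \<Rightarrow> bool" where
  "is_conj_class G C \<longleftrightarrow> (\<exists>x\<in>carrier G. C = conj_class G x)"

definition cyclic_class :: "('a, 'b) monoid_scheme \<Rightarrow> 'a set \<Rightarrow> bool" where
  "cyclic_class G C \<longleftrightarrow> is_conj_class G C \<and> \<one>\<^bsub>G\<^esub> \<notin> C \<and> card C \<ge> 2 \<and>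
     (\<exists>t\<in>C. bij_betw (Ad G t) (C - {t}) (C - {t})
            \<and> (\<forall>b\<in>C - {t}. \<forall>c\<in>C - {t}. \<exists>k::nat. (Ad G t ^^ k) b = c)
            \<and> bij_betw (\<lambda>a. Ad G a t) C C)"

definition invertible_on :: "'a set \<Rightarrow> ('a \<Rightarrow> 'a \<Rightarrow> complex) \<Rightarrow> bool" where
  "invertible_on C \<eta> \<longleftrightarrow> (\<exists>\<zeta>.
      (\<forall>a\<in>C. \<forall>c\<in>C. (\<Sum>b\<in>C. \<eta> a b * \<zeta> b c) = (if a = c then 1 else 0)) \<and>
      (\<forall>a\<in>C. \<forall>c\<in>C. (\<Sum>b\<in>C. \<zeta> a b * \<eta> b c) = (if a = c then 1 else 0)))"

definition Ad_invariant :: "('a, 'b) monoid_scheme \<Rightarrow> 'a set \<Rightarrow> ('a \<Rightarrow> 'a \<Rightarrow> complex) \<Rightarrow> bool" where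
  "Ad_invariant G C \<eta> \<longleftrightarrow> (\<forall>g\<in>carrier G. \<forall>a\<in>C. \<forall>b\<in>C.
      \<eta> (inv\<^bsub>G\<^esub> g \<otimes>\<^bsub>G\<^esub> a \<otimes>\<^bsub>G\<^esub> g) b = \<eta> a (g \<otimes>\<^bsub>G\<^esub> b \<otimes>\<^bsub>G\<^esub> inv\<^bsub>G\<^esub> g))"

end

theory Submission
  imports Defs
begin

context group
begin

lemma inv_cancel_l: "g \<in> carrier G \<Longrightarrow> a \<in> carrier G \<Longrightarrow> inv g \<otimes> (g \<otimes> a) = a"
  by (simp add: m_assoc[symmetric])

lemma inv_cancel_r: "g \<in> carrier G \<Longrightarrow> a \<in> carrier G \<Longrightarrow> g \<otimes> (inv g \<otimes> a) = a"
  by (simp add: m_assoc[symmetric])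

lemma Ad_closed[simp]: "g \<in> carrier G \<Longrightarrow> x \<in> carrier G \<Longrightarrow> Ad G g x \<in> carrier G"
  unfolding Ad_def by simp

lemma Ad_comp: "g \<in> carrier G \<Longrightarrow> h \<in> carrier G \<Longrightarrow> x \<in> carrier G \<Longrightarrow>
   Ad G g (Ad G h x) = Ad G (g \<otimes> h) x"
  unfolding Ad_def by (simp add: m_assoc inv_mult_group)

lemma Ad_one: "x \<in> carrier G \<Longrightarrow> Ad G \<one> x = x"
  unfolding Ad_def by simp

lemma Ad_inv: "g \<in> carrier G \<Longrightarrow> x \<in> carrier G \<Longrightarrow> Ad G (inv g) (Ad G g x) = x"
  by (simp add: Ad_comp Ad_one)

lemma Ad_inj: "g \<in> carrier G \<Longrightarrow> x \<in> carrier G \<Longrightarrow> y \<in> carrier G \<Longrightarrow> Ad G g x = Ad G g y \<Longrightarrow> x = y"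
  by (metis Ad_inv)

lemma Ad_self: "t \<in> carrier G \<Longrightarrow> Ad G t t = t"
  unfolding Ad_def by (simp add: m_assoc)

lemma cc_carrier: "x \<in> carrier G \<Longrightarrow> a \<in> conj_class G x \<Longrightarrow> a \<in> carrier G"
  unfolding conj_class_def by auto

lemma cc_closed: "x \<in> carrier G \<Longrightarrow> a \<in> conj_class G x \<Longrightarrow> g \<in> carrier G \<Longrightarrow> Ad G g a \<in> conj_class G x"
  unfolding conj_class_def by (auto simp: Ad_comp)

lemma cc_trans: "x \<in> carrier G \<Longrightarrow> a \<in> conj_class G x \<Longrightarrow> b \<in> conj_class G x \<Longrightarrow>
   \<exists>g\<in>carrier G. Ad G g a = b"
proof -
  assume x: "x \<in> carrier G" and a: "a \<in> conj_class G x" and b: "b \<in> conj_class G x"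
  obtain h where h: "h \<in> carrier G" "a = Ad G h x" using a unfolding conj_class_def by auto
  obtain k where k: "k \<in> carrier G" "b = Ad G k x" using b unfolding conj_class_def by auto
  have "Ad G (k \<otimes> inv h) a = b" using h k x by (simp add: Ad_comp m_assoc Ad_one)
  then show ?thesis using h k by (intro bexI[of _ "k \<otimes> inv h"]) auto
qed

end

theorem theorem1:
  fixes G :: "('a, 'b) monoid_scheme" and C :: "'a set" and \<eta> :: "'a \<Rightarrow> 'a \<Rightarrow> complex"
  assumes "group G" and "finite (carrier G)" and "cyclic_class G C"
  shows "(invertible_on C \<eta> \<and> Ad_invariant G C \<eta>) \<longleftrightarrow>
         (\<exists>s \<mu>. s \<noteq> 0 \<and> \<mu> \<noteq> - 1 / of_nat (card C) \<and>
            (\<forall>a\<in>C. \<forall>b\<in>C. \<eta> a b = s * ((if a = b then 1 else 0) + \<mu>)))"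
proof -
  interpret group G by fact
  obtain x where x: "x \<in> carrier G" and Cx: "C = conj_class G x"
    using assms(3) unfolding cyclic_class_def is_conj_class_def by auto
  have cardC: "card C \<ge> 2" using assms(3) unfolding cyclic_class_def by auto
  have finC: "finite C" using cardC card.infinite by fastforce
  obtain t where tC: "t \<in> C" and bijt: "bij_betw (Ad G t) (C - {t}) (C - {t})"
     and orb: "\<forall>b\<in>C - {t}. \<forall>c\<in>C - {t}. \<exists>k::nat. (Ad G t ^^ k) b = c"
    using assms(3) unfolding cyclic_class_def by auto
  have Ccar: "\<And>a. a \<in> C \<Longrightarrow> a \<in> carrier G" using cc_carrier x Cx by auto
  have Ccl: "\<And>a g. a \<in> C \<Longrightarrow> g \<in> carrier G \<Longrightarrow> Ad G g a \<in> C" using cc_closed x Cx by auto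
  have Ctr: "\<And>a b. a \<in> C \<Longrightarrow> b \<in> C \<Longrightarrow> \<exists>g\<in>carrier G. Ad G g a = b" using cc_trans x Cx by auto
  have nC: "(of_nat (card C) :: complex) \<noteq> 0" using cardC by simp
  show ?thesis
  proof
    assume "invertible_on C \<eta> \<and> Ad_invariant G C \<eta>"
    then have inv: "invertible_on C \<eta>" and adi: "Ad_invariant G C \<eta>" by auto
    have inv2: "\<And>g a b. g \<in> carrier G \<Longrightarrow> a \<in> C \<Longrightarrow> b \<in> C \<Longrightarrow> \<eta> (Ad G g a) (Ad G g b) = \<eta> a b"
    proof -
      fix g a b assume g: "g \<in> carrier G" and a: "a \<in> C" and b: "b \<in> C"
      have "\<eta> (inv\<^bsub>G\<^esub> g \<otimes>\<^bsub>G\<^esub> Ad G g a \<otimes>\<^bsub>G\<^esub> g) b = \<eta> (Ad G g a) (g \<otimes>\<^bsub>G\<^esub> b \<otimes>\<^bsub>G\<^esub> inv\<^bsub>G\<^esub> g)"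
        using adi g Ccl[OF a g] b unfolding Ad_invariant_def by blast
      moreover have "inv\<^bsub>G\<^esub> g \<otimes>\<^bsub>G\<^esub> Ad G g a \<otimes>\<^bsub>G\<^esub> g = a"
        using g Ccar[OF a] unfolding Ad_def by (simp add: m_assoc inv_cancel_l)
      ultimately show "\<eta> (Ad G g a) (Ad G g b) = \<eta> a b" unfolding Ad_def by simp
    qed
    obtain b0 where b0: "b0 \<in> C - {t}"
    proof -
      have "card (C - {t}) \<ge> 1" using cardC tC finC by simp
      then have "C - {t} \<noteq> {}" by (metis card.empty not_one_le_zero)
      then show ?thesis using that by blast
    qed
    have tcar: "t \<in> carrier G" using Ccar tC by auto
    have iter: "\<And>k. (Ad G t ^^ k) b0 \<in> C - {t} \<and> \<eta> t ((Ad G t ^^ k) b0) = \<eta> t b0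
                    \<and> \<eta> ((Ad G t ^^ k) b0) t = \<eta> b0 t"
    proof -
      fix k show "(Ad G t ^^ k) b0 \<in> C - {t} \<and> \<eta> t ((Ad G t ^^ k) b0) = \<eta> t b0
                    \<and> \<eta> ((Ad G t ^^ k) b0) t = \<eta> b0 t"
      proof (induction k)
        case 0 then show ?case using b0 by simp
      next
        case (Suc k)
        let ?y = "(Ad G t ^^ k) b0"
        have y: "?y \<in> C - {t}" using Suc by auto
        have "Ad G t ?y \<in> C - {t}" using bijt y bij_betwE by blast
        moreover have "\<eta> t (Ad G t ?y) = \<eta> t ?y"
          using inv2[OF tcar tC, of ?y] y Ad_self[OF tcar] by auto
        moreover have "\<eta> (Ad G t ?y) t = \<eta> ?y t"
          using inv2[OF tcar _ tC, of ?y] y Ad_self[OF tcar] by auto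
        ultimately show ?case using Suc by simp
      qed
    qed
    define \<alpha> where "\<alpha> = \<eta> t t"
    define \<beta> where "\<beta> = \<eta> t b0"
    define \<gamma> where "\<gamma> = \<eta> b0 t"
    have row: "\<And>b. b \<in> C - {t} \<Longrightarrow> \<eta> t b = \<beta>"
      using orb b0 iter unfolding \<beta>_def by metis
    have col: "\<And>b. b \<in> C - {t} \<Longrightarrow> \<eta> b t = \<gamma>"
      using orb b0 iter unfolding \<gamma>_def by metis
    have diag: "\<And>a. a \<in> C \<Longrightarrow> \<eta> a a = \<alpha>"
    proof -
      fix a assume a: "a \<in> C"
      obtain g where g: "g \<in> carrier G" "Ad G g a = t" using Ctr[OF a tC] by auto
      show "\<eta> a a = \<alpha>" using inv2[OF g(1) a a] g unfolding \<alpha>_def by simp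
    qed
    have off1: "\<And>a b. a \<in> C \<Longrightarrow> b \<in> C \<Longrightarrow> a \<noteq> b \<Longrightarrow> \<eta> a b = \<beta>"
    proof -
      fix a b assume a: "a \<in> C" and b: "b \<in> C" and ab: "a \<noteq> b"
      obtain g where g: "g \<in> carrier G" "Ad G g a = t" using Ctr[OF a tC] by auto
      have "Ad G g b \<noteq> t" using g ab Ad_inj Ccar a b by metis
      then have "\<eta> t (Ad G g b) = \<beta>" using row Ccl[OF b g(1)] by auto
      then show "\<eta> a b = \<beta>" using inv2[OF g(1) a b] g by simp
    qed
    have off2: "\<And>a b. a \<in> C \<Longrightarrow> b \<in> C \<Longrightarrow> a \<noteq> b \<Longrightarrow> \<eta> a b = \<gamma>"
    proof -
      fix a b assume a: "a \<in> C" and b: "b \<in> C" and ab: "a \<noteq> b"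
      obtain g where g: "g \<in> carrier G" "Ad G g b = t" using Ctr[OF b tC] by auto
      have "Ad G g a \<noteq> t" using g ab Ad_inj Ccar a b by metis
      then have "\<eta> (Ad G g a) t = \<gamma>" using col Ccl[OF a g(1)] by auto
      then show "\<eta> a b = \<gamma>" using inv2[OF g(1) a b] g by simp
    qed
    have form: "\<And>a b. a \<in> C \<Longrightarrow> b \<in> C \<Longrightarrow> \<eta> a b = (if a = b then \<alpha> else \<beta>)"
      using diag off1 by auto
    obtain \<zeta> where z1: "\<forall>a\<in>C. \<forall>c\<in>C. (\<Sum>b\<in>C. \<eta> a b * \<zeta> b c) = (if a = c then 1 else 0)"
      and z2: "\<forall>a\<in>C. \<forall>c\<in>C. (\<Sum>b\<in>C. \<zeta> a b * \<eta> b c) = (if a = c then 1 else 0)"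
      using inv unfolding invertible_on_def by auto
    have ab: "\<alpha> \<noteq> \<beta>"
    proof
      assume e: "\<alpha> = \<beta>"
      have "\<And>a c. a \<in> C \<Longrightarrow> c \<in> C \<Longrightarrow> (\<Sum>b\<in>C. \<eta> a b * \<zeta> b c) = \<beta> * (\<Sum>b\<in>C. \<zeta> b c)"
        using form e by (auto simp: sum_distrib_left intro!: sum.cong)
      then have "(if t = b0 then 1 else 0) = (if b0 = b0 then (1::complex) else 0)"
        using z1 tC b0 by (metis DiffD1)
      then show False using b0 by auto
    qed
    have rs: "\<And>a. a \<in> C \<Longrightarrow> (\<Sum>b\<in>C. \<eta> a b) = \<alpha> + (of_nat (card C) - 1) * \<beta>"
    proof -
      fix a assume a: "a \<in> C"
      have "(\<Sum>b\<in>C. \<eta> a b) = \<eta> a a + (\<Sum>b\<in>C - {a}. \<eta> a b)"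
        using finC a by (simp add: sum.remove)
      also have "(\<Sum>b\<in>C - {a}. \<eta> a b) = (\<Sum>b\<in>C - {a}. \<beta>)"
        using off1 a by (intro sum.cong) auto
      also have "\<dots> = of_nat (card C - 1) * \<beta>" using finC a by simp
      finally show "(\<Sum>b\<in>C. \<eta> a b) = \<alpha> + (of_nat (card C) - 1) * \<beta>"
        using diag[OF a] cardC by (simp add: of_nat_diff)
    qed
    have nz: "\<alpha> + (of_nat (card C) - 1) * \<beta> \<noteq> 0"
    proof
      assume e: "\<alpha> + (of_nat (card C) - 1) * \<beta> = 0"
      have "(\<Sum>c\<in>C. \<Sum>b\<in>C. \<zeta> t b * \<eta> b c) = (\<Sum>c\<in>C. if t = c then 1 else (0::complex))"
        using z2 tC by (intro sum.cong) auto
      also have "\<dots> = 1" using finC tC by simp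
      finally have "(\<Sum>c\<in>C. \<Sum>b\<in>C. \<zeta> t b * \<eta> b c) = 1" .
      moreover have "(\<Sum>c\<in>C. \<Sum>b\<in>C. \<zeta> t b * \<eta> b c) = (\<Sum>b\<in>C. \<zeta> t b * (\<Sum>c\<in>C. \<eta> b c))"
        by (subst sum.swap) (simp add: sum_distrib_left)
      moreover have "\<dots> = 0" using rs e by simp
      ultimately show False by simp
    qed
    define s where "s = \<alpha> - \<beta>"
    define \<mu> where "\<mu> = \<beta> / s"
    have s0: "s \<noteq> 0" using ab s_def by simp
    have "\<mu> \<noteq> - 1 / of_nat (card C)"
    proof
      assume "\<mu> = - 1 / of_nat (card C)"
      then have "\<beta> * of_nat (card C) = - s" using s0 nC unfolding \<mu>_def by (simp add: field_simps)
      then show False using nz unfolding s_def by (simp add: algebra_simps)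
    qed
    moreover have "\<forall>a\<in>C. \<forall>b\<in>C. \<eta> a b = s * ((if a = b then 1 else 0) + \<mu>)"
      using form s0 unfolding \<mu>_def s_def by (auto simp: field_simps)
    ultimately show "\<exists>s \<mu>. s \<noteq> 0 \<and> \<mu> \<noteq> - 1 / of_nat (card C) \<and>
            (\<forall>a\<in>C. \<forall>b\<in>C. \<eta> a b = s * ((if a = b then 1 else 0) + \<mu>))" using s0 by blast
  next
    assume "\<exists>s \<mu>. s \<noteq> 0 \<and> \<mu> \<noteq> - 1 / of_nat (card C) \<and>
            (\<forall>a\<in>C. \<forall>b\<in>C. \<eta> a b = s * ((if a = b then 1 else 0) + \<mu>))"
    then obtain s \<mu> where s0: "s \<noteq> 0" and mu: "\<mu> \<noteq> - 1 / of_nat (card C)"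
      and eta: "\<forall>a\<in>C. \<forall>b\<in>C. \<eta> a b = s * ((if a = b then 1 else 0) + \<mu>)" by auto
    define n where "n = (of_nat (card C) :: complex)"
    have d: "1 + n * \<mu> \<noteq> 0"
    proof
      assume "1 + n * \<mu> = 0"
      then have "\<mu> * n = - 1" by (simp add: algebra_simps add_eq_0_iff)
      then have "\<mu> = - 1 / n" using nC unfolding n_def by (simp add: field_simps)
      then show False using mu unfolding n_def by simp
    qed
    define \<nu> where "\<nu> = - \<mu> / (1 + n * \<mu>)"
    define \<zeta> :: "'a \<Rightarrow> 'a \<Rightarrow> complex" where "\<zeta> = (\<lambda>a b. ((if a = b then 1 else 0) + \<nu>) / s)"
    have key: "\<mu> + \<nu> + n * \<mu> * \<nu> = 0"
      using d unfolding \<nu>_def by (simp add: field_simps)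
    have prod: "\<And>a c (p::complex) (q::complex). a \<in> C \<Longrightarrow> c \<in> C \<Longrightarrow>
       (\<Sum>b\<in>C. ((if a = b then 1 else 0) + p) * ((if b = c then 1 else 0) + q))
        = (if a = c then 1 else 0) + (p + q + n * p * q)"
    proof -
      fix a c and p q :: complex assume a: "a \<in> C" and c: "c \<in> C"
      have "(\<Sum>b\<in>C. ((if a = b then 1 else 0) + p) * ((if b = c then 1 else 0) + q))
        = (\<Sum>b\<in>C. (if b = a then (if a = c then 1 else 0) else 0) + (if b = a then q else 0)
             + (if b = c then p else 0) + p * q)"
        by (intro sum.cong) (auto simp: algebra_simps)
      also have "\<dots> = (if a = c then 1 else 0) + q + p + n * (p * q)"
        using finC a c by (simp only: sum.distrib sum.delta n_def sum_constant if_True)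
      finally show "(\<Sum>b\<in>C. ((if a = b then 1 else 0) + p) * ((if b = c then 1 else 0) + q))
        = (if a = c then 1 else 0) + (p + q + n * p * q)" by (simp add: algebra_simps)
    qed
    have "invertible_on C \<eta>"
      unfolding invertible_on_def
    proof (rule exI[of _ \<zeta>], intro conjI ballI)
      fix a c assume a: "a \<in> C" and c: "c \<in> C"
      have "(\<Sum>b\<in>C. \<eta> a b * \<zeta> b c) = (\<Sum>b\<in>C. ((if a = b then 1 else 0) + \<mu>) * ((if b = c then 1 else 0) + \<nu>))"
        using eta a s0 unfolding \<zeta>_def by (intro sum.cong) auto
      then show "(\<Sum>b\<in>C. \<eta> a b * \<zeta> b c) = (if a = c then 1 else 0)" using prod[OF a c] key by simp
    next
      fix a c assume a: "a \<in> C" and c: "c \<in> C"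
      have "(\<Sum>b\<in>C. \<zeta> a b * \<eta> b c) = (\<Sum>b\<in>C. ((if a = b then 1 else 0) + \<nu>) * ((if b = c then 1 else 0) + \<mu>))"
        using eta c s0 unfolding \<zeta>_def by (intro sum.cong) auto
      moreover have "\<nu> + \<mu> + n * \<nu> * \<mu> = 0" using key by (simp add: algebra_simps)
      ultimately show "(\<Sum>b\<in>C. \<zeta> a b * \<eta> b c) = (if a = c then 1 else 0)" using prod[OF a c, of \<nu> \<mu>] by simp
    qed
    moreover have "Ad_invariant G C \<eta>"
      unfolding Ad_invariant_def
    proof (intro ballI)
      fix g a b assume g: "g \<in> carrier G" and a: "a \<in> C" and b: "b \<in> C"
      have a': "inv\<^bsub>G\<^esub> g \<otimes>\<^bsub>G\<^esub> a \<otimes>\<^bsub>G\<^esub> g \<in> C" using Ccl[OF a, of "inv\<^bsub>G\<^esub> g"] g unfolding Ad_def by simp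
      have b': "g \<otimes>\<^bsub>G\<^esub> b \<otimes>\<^bsub>G\<^esub> inv\<^bsub>G\<^esub> g \<in> C" using Ccl[OF b g] unfolding Ad_def by simp
      have "(inv\<^bsub>G\<^esub> g \<otimes>\<^bsub>G\<^esub> a \<otimes>\<^bsub>G\<^esub> g = b) \<longleftrightarrow> (a = g \<otimes>\<^bsub>G\<^esub> b \<otimes>\<^bsub>G\<^esub> inv\<^bsub>G\<^esub> g)"
        using g Ccar[OF a] Ccar[OF b] Ad_inv[of g a] Ad_inv[of "inv\<^bsub>G\<^esub> g" b]
        unfolding Ad_def by (auto simp: m_assoc inv_cancel_l inv_cancel_r)
      then show "\<eta> (inv\<^bsub>G\<^esub> g \<otimes>\<^bsub>G\<^esub> a \<otimes>\<^bsub>G\<^esub> g) b = \<eta> a (g \<otimes>\<^bsub>G\<^esub> b \<otimes>\<^bsub>G\<^esub> inv\<^bsub>G\<^esub> g)"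
        using eta a b a' b' by simp
    qed
    ultimately show "invertible_on C \<eta> \<and> Ad_invariant G C \<eta>" by simp
  qed
qed

end
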